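(* If a finite symmetric subset $F\subset\mathrm{SL}_3(\mathbb{R})$ satisfies condition $(\ast)$, then $F$ freely generates a free subgroup of $\mathrm{SL}_3(\mathbb{R})$ (every reduced word $g_1\cdots g_n$, $n\ge1$, $g_i\in F$, $g_k\neq g_{k+1}^{-1}$, is non-trivial), and this subgroup is quasi-isometrically embedded in $\mathrm{SL}_3(\mathbb{R})$.
   Context: For $g\in\mathrm{SL}_3(\mathbb{R})$ and a line $L\in\mathbb{RP}^2$, $\|g|_L\|:=\|gv\|/\|v\|$ for any non-zero $v\in L$ (Euclidean norm). A finite symmetric set $F\subset\mathrm{SL}_3(\mathbb{R})$ satisfies condition $(\ast)$ if there exist $c>1$, a line $L_0\in\mathbb{RP}^2$, and for each $g\in F$ a subset $C_g\subset\mathbb{RP}^2$ such that: (i) $C_g\cap C_h=\emptyset$ if $g\ne h$; (ii) $L_0\notin\bigcup_{g\in F}C_g$; (iii) $g\cdot L_0\in C_g$ for all $g\in F$; (iv) $g\cdot C_h\subset C_g$ whenever $g\neq h^{-1}$; (v) $\|g|_L\|\ge c$ for all $L\in\bigcup_{h\ne g^{-1}}C_h$. *)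

theory Defs
  imports "HOL-Analysis.Analysis"
begin

type_synonym mat3 = "real^3^3"

definition SL3 :: "mat3 set" where
  "SL3 = {g. det g = 1}"

definition RP2 :: "(real^3) set set" where
  "RP2 = {L. \<exists>v. v \<noteq> 0 \<and> L = span {v}}"

definition act_line :: "mat3 \<Rightarrow> (real^3) set \<Rightarrow> (real^3) set" where
  "act_line g L = (\<lambda>x. g *v x) ` L"

definition restr_norm :: "mat3 \<Rightarrow> (real^3) set \<Rightarrow> real" where
  "restr_norm g L = (let v = (SOME v. v \<in> L \<and> v \<noteq> 0) in norm (g *v v) / norm v)"

definition symmetric_set :: "mat3 set \<Rightarrow> bool" where
  "symmetric_set F \<longleftrightarrow> (\<forall>g\<in>F. matrix_inv g \<in> F)"

definition cond_star :: "mat3 set \<Rightarrow> bool" where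
  "cond_star F \<longleftrightarrow> (\<exists>c::real. \<exists>L0. \<exists>C :: mat3 \<Rightarrow> (real^3) set set.
      c > 1 \<and> L0 \<in> RP2 \<and> (\<forall>g\<in>F. C g \<subseteq> RP2) \<and>
      (\<forall>g\<in>F. \<forall>h\<in>F. g \<noteq> h \<longrightarrow> C g \<inter> C h = {}) \<and>
      L0 \<notin> (\<Union>g\<in>F. C g) \<and>
      (\<forall>g\<in>F. act_line g L0 \<in> C g) \<and>
      (\<forall>g\<in>F. \<forall>h\<in>F. g \<noteq> matrix_inv h \<longrightarrow> act_line g ` C h \<subseteq> C g) \<and>
      (\<forall>g\<in>F. \<forall>L \<in> (\<Union>h\<in>{h\<in>F. h \<noteq> matrix_inv g}. C h). restr_norm g L \<ge> c))"

definition word_prod :: "mat3 list \<Rightarrow> mat3" where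
  "word_prod ws = foldr (**) ws (mat 1)"

definition reduced_word :: "mat3 list \<Rightarrow> bool" where
  "reduced_word ws \<longleftrightarrow> (\<forall>k. Suc k < length ws \<longrightarrow> ws ! k \<noteq> matrix_inv (ws ! Suc k))"

definition gen_group :: "mat3 set \<Rightarrow> mat3 set" where
  "gen_group F = {word_prod ws | ws. set ws \<subseteq> F}"

definition word_length :: "mat3 set \<Rightarrow> mat3 \<Rightarrow> nat" where
  "word_length F g = (LEAST n. \<exists>ws. length ws = n \<and> set ws \<subseteq> F \<and> word_prod ws = g)"

definition word_dist :: "mat3 set \<Rightarrow> mat3 \<Rightarrow> mat3 \<Rightarrow> real" where
  "word_dist F g h = real (word_length F (matrix_inv g ** h))"

text \<open>A left-invariant metric on SL_3(R) (pseudo-metric, quasi-isometric to any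
  left-invariant Riemannian metric): d(g,h) = log |g^-1 h| + log |h^-1 g|, operator norms.\<close>
definition sl_dist :: "mat3 \<Rightarrow> mat3 \<Rightarrow> real" where
  "sl_dist g h = ln (onorm (\<lambda>x. (matrix_inv g ** h) *v x)) + ln (onorm (\<lambda>x. (matrix_inv h ** g) *v x))"

definition qi_embedded :: "mat3 set \<Rightarrow> bool" where
  "qi_embedded F \<longleftrightarrow> (\<exists>A B. A \<ge> 1 \<and> B \<ge> 0 \<and>
     (\<forall>g\<in>gen_group F. \<forall>h\<in>gen_group F.
        word_dist F g h / A - B \<le> sl_dist g h \<and> sl_dist g h \<le> A * word_dist F g h + B))"

end

theory Submission imports Defs begin

lemma inv_lr:
  fixes A :: mat3
  assumes "det A \<noteq> 0"
  shows "matrix_inv A ** A = mat 1" "A ** matrix_inv A = mat 1"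
proof -
  have "invertible A" using assms invertible_det_nz by blast
  then have "\<exists>A'. A ** A' = mat 1 \<and> A' ** A = mat 1" unfolding invertible_def by blast
  from someI_ex[OF this] show "matrix_inv A ** A = mat 1" "A ** matrix_inv A = mat 1"
    unfolding matrix_inv_def by auto
qed

lemma inv_unique:
  fixes A B :: mat3
  assumes "det A \<noteq> 0" "B ** A = mat 1"
  shows "matrix_inv A = B"
proof -
  have "B = B ** (A ** matrix_inv A)" using inv_lr[OF assms(1)] by simp
  also have "\<dots> = matrix_inv A" by (simp add: matrix_mul_assoc assms(2))
  finally show ?thesis by simp
qed

lemma det_inv:
  fixes A :: mat3
  assumes "det A = 1"
  shows "det (matrix_inv A) = 1"
proof -
  have "det (matrix_inv A ** A) = 1" using inv_lr assms by simp
  then show ?thesis using assms by (simp add: det_mul)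
qed

lemma inv_inv:
  fixes A :: mat3
  assumes "det A = 1"
  shows "matrix_inv (matrix_inv A) = A"
  using inv_unique[of "matrix_inv A" A] det_inv[OF assms] inv_lr[of A] assms by simp

lemma wp_Nil[simp]: "word_prod [] = mat 1" by (simp add: word_prod_def)
lemma wp_Cons[simp]: "word_prod (a # ws) = a ** word_prod ws" by (simp add: word_prod_def)
lemma wp_append: "word_prod (xs @ ys) = word_prod xs ** word_prod ys"
  by (induction xs) (auto simp: matrix_mul_assoc)

lemma det_wp: "set ws \<subseteq> SL3 \<Longrightarrow> det (word_prod ws) = 1"
  by (induction ws) (auto simp: SL3_def det_mul)

lemma inv_wp:
  assumes "set ws \<subseteq> SL3"
  shows "matrix_inv (word_prod ws) = word_prod (map matrix_inv (rev ws))"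
proof -
  have "word_prod (map matrix_inv (rev ws)) ** word_prod ws = mat 1" using assms
  proof (induction ws)
    case Nil then show ?case by simp
  next
    case (Cons a ws)
    have da: "det a = 1" using Cons.prems by (auto simp: SL3_def)
    have "word_prod (map matrix_inv (rev (a # ws))) ** word_prod (a # ws)
       = word_prod (map matrix_inv (rev ws)) ** ((matrix_inv a ** a) ** word_prod ws)"
      by (simp add: wp_append matrix_mul_assoc)
    also have "\<dots> = mat 1" using inv_lr[of a] da Cons by simp
    finally show ?case .
  qed
  then show ?thesis using inv_unique det_wp[OF assms] by simp
qed

lemma nz_mul:
  fixes A :: mat3
  assumes "det A \<noteq> 0" "x \<noteq> 0"
  shows "A *v x \<noteq> 0"
proof
  assume "A *v x = 0"
  then have "matrix_inv A *v (A *v x) = 0" by simp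
  then show False using inv_lr[OF assms(1)] assms(2) by (simp add: matrix_vector_mul_assoc)
qed

lemma restr_norm_eq:
  assumes "L \<in> RP2" "w \<in> L" "w \<noteq> 0"
  shows "restr_norm g L = norm (g *v w) / norm w"
proof -
  obtain u where u: "u \<noteq> 0" "L = span {u}" using assms(1) unfolding RP2_def by blast
  have ex: "\<exists>v. v \<in> L \<and> v \<noteq> 0" using assms by blast
  define v where "v = (SOME v. v \<in> L \<and> v \<noteq> 0)"
  have v: "v \<in> L" "v \<noteq> 0" using someI_ex[OF ex] unfolding v_def by auto
  obtain a where a: "v = a *\<^sub>R u" using v u by (auto simp: span_singleton)
  obtain b where b: "w = b *\<^sub>R u" using assms u by (auto simp: span_singleton)
  have "a \<noteq> 0" "b \<noteq> 0" using a b v assms by auto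
  have "norm (g *v v) / norm v = norm (g *v u) / norm u"
    using \<open>a \<noteq> 0\<close> by (simp add: a matrix_vector_mult_scaleR)
  moreover have "norm (g *v w) / norm w = norm (g *v u) / norm u"
    using \<open>b \<noteq> 0\<close> by (simp add: b matrix_vector_mult_scaleR)
  ultimately show ?thesis unfolding restr_norm_def v_def[symmetric] Let_def by simp
qed

lemma act_mul: "act_line (A ** B) L = act_line A (act_line B L)"
  unfolding act_line_def by (auto simp: image_image matrix_vector_mul_assoc)

lemma reduced_Cons:
  assumes "reduced_word (a # b # ws)"
  shows "reduced_word (b # ws)" "a \<noteq> matrix_inv b"
proof -
  show "reduced_word (b # ws)" unfolding reduced_word_def
  proof (intro allI impI)
    fix k assume "Suc k < length (b # ws)"
    then show "(b # ws) ! k \<noteq> matrix_inv ((b # ws) ! Suc k)"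
      using assms unfolding reduced_word_def by (metis length_Cons nth_Cons_Suc Suc_less_eq)
  qed
  show "a \<noteq> matrix_inv b" using assms unfolding reduced_word_def by (metis length_Cons nth_Cons_0 nth_Cons_Suc zero_less_Suc Suc_less_eq)
qed


lemma ping:
  assumes CR: "\<forall>g\<in>F. C g \<subseteq> RP2"
    and iii: "\<forall>g\<in>F. act_line g L0 \<in> C g"
    and iv: "\<forall>g\<in>F. \<forall>h\<in>F. g \<noteq> matrix_inv h \<longrightarrow> act_line g ` C h \<subseteq> C g"
    and v5: "\<forall>g\<in>F. \<forall>L \<in> (\<Union>h\<in>{h\<in>F. h \<noteq> matrix_inv g}. C h). restr_norm g L \<ge> c"
    and FS: "F \<subseteq> SL3" and c: "c > 1"
    and v: "v \<in> L0" "v \<noteq> 0"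
  shows "ws \<noteq> [] \<Longrightarrow> set ws \<subseteq> F \<Longrightarrow> reduced_word ws \<Longrightarrow>
     act_line (word_prod ws) L0 \<in> C (hd ws) \<and> norm (word_prod ws *v v) \<ge> c^(length ws - 1) * norm (last ws *v v)"
proof (induction ws)
  case Nil then show ?case by simp
next
  case (Cons a rest)
  show ?case
  proof (cases rest)
    case Nil
    then show ?thesis using Cons.prems iii by simp
  next
    case (Cons b rest')
    have red: "reduced_word rest" "a \<noteq> matrix_inv b" using reduced_Cons Cons.prems(3) \<open>rest = b # rest'\<close> by auto
    have aF: "a \<in> F" and bF: "b \<in> F" and rF: "set rest \<subseteq> F" using Cons.prems \<open>rest = b # rest'\<close> by auto
    have IH: "act_line (word_prod rest) L0 \<in> C b"
       "norm (word_prod rest *v v) \<ge> c^(length rest - 1) * norm (last rest *v v)"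
      using Cons.IH[OF _ rF red(1)] \<open>rest = b # rest'\<close> by auto
    have da: "det a = 1" "det b = 1" using aF bF FS by (auto simp: SL3_def)
    have ba: "b \<noteq> matrix_inv a"
    proof
      assume "b = matrix_inv a"
      then have "matrix_inv b = a" using inv_inv da by simp
      then show False using red(2) by simp
    qed
    have act: "act_line (word_prod (a # rest)) L0 \<in> C a"
      using iv aF bF red(2) IH(1) by (auto simp: act_mul)
    define w where "w = word_prod rest *v v"
    have dW: "det (word_prod rest) = 1" using det_wp rF FS by blast
    have wnz: "w \<noteq> 0" unfolding w_def using nz_mul dW v by simp
    have wL: "w \<in> act_line (word_prod rest) L0" unfolding w_def act_line_def using v by blast
    have LR: "act_line (word_prod rest) L0 \<in> RP2" using IH(1) CR bF by blast
    have "restr_norm a (act_line (word_prod rest) L0) \<ge> c"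
      using v5 aF bF ba IH(1) by blast
    then have "norm (a *v w) / norm w \<ge> c" using restr_norm_eq[OF LR wL wnz] by simp
    then have n1: "norm (a *v w) \<ge> c * norm w" using wnz by (simp add: pos_le_divide_eq)
    have "c^(length (a # rest) - 1) * norm (last (a # rest) *v v)
        = c * (c^(length rest - 1) * norm (last rest *v v))"
      using \<open>rest = b # rest'\<close> by simp
    also have "\<dots> \<le> c * norm w" using IH(2) c unfolding w_def by simp
    also have "\<dots> \<le> norm (word_prod (a # rest) *v v)" using n1 unfolding w_def
      by (simp add: matrix_vector_mul_assoc)
    finally show ?thesis using act by simp
  qed
qed

lemma shorten:
  assumes "set ws \<subseteq> SL3" "\<not> reduced_word ws"
  shows "\<exists>ws'. length ws' < length ws \<and> set ws' \<subseteq> set ws \<and> word_prod ws' = word_prod ws"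
proof -
  obtain k where k: "Suc k < length ws" "ws ! k = matrix_inv (ws ! Suc k)"
    using assms(2) unfolding reduced_word_def by blast
  have e: "ws = take k ws @ ws ! k # ws ! Suc k # drop (Suc (Suc k)) ws"
    using k(1) by (metis Cons_nth_drop_Suc Suc_lessD append_take_drop_id)
  have "ws ! Suc k \<in> SL3" using k(1) assms(1) by (meson nth_mem subsetD)
  then have "ws ! k ** ws ! Suc k = mat 1" using k(2) inv_lr by (simp add: SL3_def)
  then have wp: "word_prod ws = word_prod (take k ws @ drop (Suc (Suc k)) ws)"
    by (subst e) (simp add: wp_append matrix_mul_assoc)
  show ?thesis
    apply (rule exI[of _ "take k ws @ drop (Suc (Suc k)) ws"])
    using k(1) wp by (auto dest: in_set_takeD in_set_dropD)
qed

lemma reduced_inv: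
  assumes "set ws \<subseteq> SL3" "reduced_word ws"
  shows "reduced_word (map matrix_inv (rev ws))"
  unfolding reduced_word_def
proof (intro allI impI)
  fix k assume k: "Suc k < length (map matrix_inv (rev ws))"
  define n where "n = length ws"
  have kn: "Suc k < n" using k n_def by simp
  define j where "j = n - Suc (Suc k)"
  have e1: "(map matrix_inv (rev ws)) ! k = matrix_inv (ws ! Suc j)"
    using kn by (simp add: rev_nth j_def n_def Suc_diff_Suc)
  have e2: "(map matrix_inv (rev ws)) ! Suc k = matrix_inv (ws ! j)"
    using kn by (simp add: rev_nth j_def n_def)
  have sj: "Suc j < length ws" using kn j_def n_def by simp
  have "ws ! j \<in> set ws" "ws ! Suc j \<in> set ws" using sj by auto
  then have d1: "det (ws ! j) = 1" "det (ws ! Suc j) = 1" using assms(1)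
    by (auto simp: SL3_def)
  have r: "ws ! j \<noteq> matrix_inv (ws ! Suc j)" using assms(2) sj unfolding reduced_word_def by blast
  show "map matrix_inv (rev ws) ! k \<noteq> matrix_inv (map matrix_inv (rev ws) ! Suc k)"
    unfolding e1 e2 using inv_inv[OF d1(1)] r
    by (metis d1(2) inv_inv)
qed


lemma norm_up:
  assumes "\<forall>g\<in>F. onorm (\<lambda>x. g *v x) \<le> M" "M \<ge> 0"
  shows "set ws \<subseteq> F \<Longrightarrow> norm (word_prod ws *v x) \<le> M^length ws * norm x"
proof (induction ws)
  case Nil then show ?case by simp
next
  case (Cons a ws)
  have "norm (word_prod (a # ws) *v x) = norm (a *v (word_prod ws *v x))"
    by (simp add: matrix_vector_mul_assoc)
  also have "\<dots> \<le> onorm (\<lambda>x. a *v x) * norm (word_prod ws *v x)"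
    by (rule onorm) simp
  also have "\<dots> \<le> M * (M^length ws * norm x)"
    using Cons assms by (intro mult_mono) (auto intro: onorm_pos_le)
  finally show ?case by simp
qed

lemma onorm_up:
  assumes "\<forall>g\<in>F. onorm (\<lambda>x. g *v x) \<le> M" "M \<ge> 0" "set ws \<subseteq> F"
  shows "onorm (\<lambda>x. word_prod ws *v x) \<le> M^length ws"
  by (rule onorm_le) (rule norm_up[OF assms])

theorem mainTheorem10:
  fixes F :: "mat3 set"
  assumes "finite F" and "F \<subseteq> SL3" and "symmetric_set F" and "cond_star F"
  shows "(\<forall>ws. ws \<noteq> [] \<and> set ws \<subseteq> F \<and> reduced_word ws \<longrightarrow> word_prod ws \<noteq> mat 1)
         \<and> qi_embedded F"
proof -
  obtain c L0 C where c: "c > 1" and L0: "L0 \<in> RP2" and CR: "\<forall>g\<in>F. C g \<subseteq> RP2"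
    and L0n: "L0 \<notin> (\<Union>g\<in>F. C g)"
    and iii: "\<forall>g\<in>F. act_line g L0 \<in> C g"
    and iv: "\<forall>g\<in>F. \<forall>h\<in>F. g \<noteq> matrix_inv h \<longrightarrow> act_line g ` C h \<subseteq> C g"
    and v5: "\<forall>g\<in>F. \<forall>L \<in> (\<Union>h\<in>{h\<in>F. h \<noteq> matrix_inv g}. C h). restr_norm g L \<ge> c"
    using assms(4) unfolding cond_star_def by (elim exE conjE) (rule that, assumption+)
  have invF: "\<And>g. g \<in> F \<Longrightarrow> matrix_inv g \<in> F" using assms(3) unfolding symmetric_set_def by blast
  obtain v where v: "v \<in> L0" "v \<noteq> 0"
  proof -
    obtain u where "u \<noteq> 0" "L0 = span {u}" using L0 unfolding RP2_def by blast
    then show ?thesis using that span_base[of u "{u}"] by blast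
  qed
  note P = ping[OF CR iii iv v5 assms(2) c v]
  have free: "\<forall>ws. ws \<noteq> [] \<and> set ws \<subseteq> F \<and> reduced_word ws \<longrightarrow> word_prod ws \<noteq> mat 1"
  proof (intro allI impI notI)
    fix ws assume h: "ws \<noteq> [] \<and> set ws \<subseteq> F \<and> reduced_word ws" and e: "word_prod ws = mat 1"
    from h have h1: "ws \<noteq> []" "set ws \<subseteq> F" "reduced_word ws" by auto
    have "act_line (word_prod ws) L0 \<in> C (hd ws)" using P[OF h1] by (rule conjunct1)
    then have "act_line (mat 1) L0 \<in> C (hd ws)" using e by simp
    moreover have "act_line (mat 1) L0 = L0" unfolding act_line_def by simp
    moreover have "hd ws \<in> F" using h1 hd_in_set by blast
    ultimately show False using L0n by auto
  qed
  define M where "M = 1 + (\<Sum>g\<in>F. onorm (\<lambda>x. g *v x))"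
  have onF: "\<forall>g\<in>F. onorm (\<lambda>x. g *v x) \<le> M"
  proof
    fix g assume "g \<in> F"
    have "onorm (\<lambda>x. g *v x) \<le> (\<Sum>g\<in>F. onorm (\<lambda>x. g *v x))"
      using \<open>g \<in> F\<close> assms(1) by (intro member_le_sum) (auto intro: onorm_pos_le)
    then show "onorm (\<lambda>x. g *v x) \<le> M" unfolding M_def by simp
  qed
  have M1: "M \<ge> 1" unfolding M_def by (auto intro!: sum_nonneg onorm_pos_le)
  have low: "onorm (\<lambda>x. word_prod ws *v x) \<ge> c^length ws / (c*M)"
    if ws: "set ws \<subseteq> F" "reduced_word ws" for ws
  proof (cases "ws = []")
    case True
    have "norm ((mat 1::mat3) *v v) / norm v \<le> onorm (\<lambda>x. (mat 1::mat3) *v x)"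
      by (rule le_onorm) simp
    then have "1 \<le> onorm (\<lambda>x. word_prod ws *v x)" using v True by simp
    moreover have "1 * 1 \<le> c*M" using c M1 by (intro mult_mono) auto
    then have "1 / (c*M) \<le> 1" by simp
    ultimately show ?thesis using True by simp
  next
    case False
    define g where "g = last ws"
    have gF: "g \<in> F" using False ws g_def by (meson last_in_set subsetD)
    have dg: "det g = 1" using gF assms(2) by (auto simp: SL3_def)
    have "norm v = norm (matrix_inv g *v (g *v v))"
      using inv_lr[of g] dg by (simp add: matrix_vector_mul_assoc)
    also have "\<dots> \<le> onorm (\<lambda>x. matrix_inv g *v x) * norm (g *v v)"
      by (rule onorm) simp
    also have "\<dots> \<le> M * norm (g *v v)"
      using onF invF[OF gF] by (intro mult_right_mono) auto
    finally have nv: "norm v \<le> M * norm (g *v v)" .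
    have pw: "norm (word_prod ws *v v) \<ge> c^(length ws - 1) * norm (g *v v)"
      unfolding g_def using P[OF False ws] by (rule conjunct2)
    have "c^length ws / (c*M) = c^(length ws - 1) * (1/M)"
      using False c M1 by (cases ws) (auto simp: field_simps)
    also have "\<dots> \<le> c^(length ws - 1) * (norm (g *v v) / norm v)"
      using nv v M1 c by (intro mult_left_mono) (auto simp: field_simps)
    also have "\<dots> \<le> norm (word_prod ws *v v) / norm v"
      using pw v by (simp add: divide_right_mono)
    also have "\<dots> \<le> onorm (\<lambda>x. word_prod ws *v x)"
      by (rule le_onorm) simp
    finally show ?thesis .
  qed
  define A where "A = max 1 (max (2 * ln M) (1 / ln c))"
  define B where "B = 2 * ln (c * M)"
  have lnc: "ln c > 0" using c by simp
  have A1: "A \<ge> 1" "A \<ge> 2 * ln M" "A \<ge> 1 / ln c" unfolding A_def by auto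
  have "1 * 1 \<le> c * M" using c M1 by (intro mult_mono) auto
  then have B0: "B \<ge> 0" unfolding B_def by simp
  have key: "word_dist F g h / A - B \<le> sl_dist g h \<and> sl_dist g h \<le> A * word_dist F g h + B"
    if g: "g \<in> gen_group F" and h: "h \<in> gen_group F" for g h
  proof -
    obtain ws1 where ws1: "set ws1 \<subseteq> F" "g = word_prod ws1" using g unfolding gen_group_def by blast
    obtain ws2 where ws2: "set ws2 \<subseteq> F" "h = word_prod ws2" using h unfolding gen_group_def by blast
    have dg: "det g = 1" "det h = 1" using ws1 ws2 assms(2) det_wp by blast+
    define W where "W = matrix_inv g ** h"
    have "W = word_prod (map matrix_inv (rev ws1) @ ws2)"
      unfolding W_def using ws1 ws2 assms(2) by (simp add: wp_append inv_wp)
    moreover have "set (map matrix_inv (rev ws1) @ ws2) \<subseteq> F" using ws1 ws2 invF by auto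
    ultimately have ex: "\<exists>n ws. length ws = n \<and> set ws \<subseteq> F \<and> word_prod ws = W" by blast
    define n where "n = word_length F W"
    obtain ws where ws: "length ws = n" "set ws \<subseteq> F" "word_prod ws = W"
      using LeastI_ex[OF ex] unfolding n_def word_length_def by blast
    have red: "reduced_word ws"
    proof (rule ccontr)
      assume "\<not> reduced_word ws"
      then obtain ws' where ws': "length ws' < length ws" "set ws' \<subseteq> set ws" "word_prod ws' = word_prod ws"
        using shorten ws(2) assms(2) by blast
      then have "word_length F W \<le> length ws'" unfolding word_length_def
        using ws by (intro Least_le) auto
      then show False using ws' ws n_def by simp
    qed
    have dW: "det W = 1" unfolding W_def using dg det_inv by (simp add: det_mul)
    have "(matrix_inv h ** g) ** W = mat 1"
    proof -
      have "(matrix_inv h ** g) ** (matrix_inv g ** h) = matrix_inv h ** ((g ** matrix_inv g) ** h)"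
        by (simp add: matrix_mul_assoc)
      also have "\<dots> = mat 1" using inv_lr[of g] inv_lr[of h] dg by simp
      finally show ?thesis by (simp add: W_def)
    qed
    then have W'eq: "matrix_inv h ** g = word_prod (map matrix_inv (rev ws))"
      using inv_unique[of W] dW inv_wp[of ws] ws assms(2) by auto
    have ws'F: "set (map matrix_inv (rev ws)) \<subseteq> F" using ws invF by auto
    have red': "reduced_word (map matrix_inv (rev ws))" using reduced_inv red ws assms(2) by blast
    define a1 where "a1 = onorm (\<lambda>x. (matrix_inv g ** h) *v x)"
    define a2 where "a2 = onorm (\<lambda>x. (matrix_inv h ** g) *v x)"
    have lo1: "a1 \<ge> c^n / (c*M)" using low[OF ws(2) red] ws unfolding a1_def W_def by simp
    have lo2: "a2 \<ge> c^n / (c*M)" using low[OF ws'F red'] ws unfolding a2_def W'eq by simp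
    have up1: "a1 \<le> M^n" using onorm_up[OF onF _ ws(2)] M1 ws unfolding a1_def W_def by simp
    have up2: "a2 \<le> M^n" using onorm_up[OF onF _ ws'F] M1 ws unfolding a2_def W'eq by simp
    have pos: "c^n / (c*M) > 0" using c M1 by simp
    have cM: "c * M > 0" using c M1 by simp
    have lnq: "ln (c^n / (c*M)) = n * ln c - ln (c*M)"
      using c cM M1 by (simp add: ln_div ln_realpow)
    have lnM: "ln (M^n) = n * ln M" using M1 by (simp add: ln_realpow)
    have a1p: "a1 > 0" "a2 > 0" using lo1 lo2 pos by linarith+
    have l1: "ln a1 \<ge> n * ln c - ln (c*M)" "ln a2 \<ge> n * ln c - ln (c*M)"
      using lo1 lo2 pos a1p lnq by (subst lnq[symmetric], subst ln_le_cancel_iff, auto)+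
    have u1: "ln a1 \<le> n * ln M" "ln a2 \<le> n * ln M"
      using up1 up2 a1p lnM M1 by (subst lnM[symmetric], subst ln_le_cancel_iff, auto)+
    have sd: "sl_dist g h = ln a1 + ln a2" unfolding sl_dist_def a1_def a2_def by simp
    have wd: "word_dist F g h = real n" unfolding word_dist_def n_def W_def by simp
    have "1 \<le> A * ln c" using A1(3) lnc by (simp add: divide_le_eq)
    then have iA: "1 / A \<le> ln c" using A1(1) by (simp add: divide_le_eq mult.commute)
    have "real n / A = real n * (1 / A)" by simp
    also have "\<dots> \<le> real n * ln c" using iA by (intro mult_left_mono) auto
    finally have nA: "real n / A \<le> real n * ln c" .
    have "0 \<le> real n * ln c" using lnc by simp
    then have r1: "word_dist F g h / A - B \<le> sl_dist g h"
      using l1 nA unfolding sd wd B_def by linarith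
    have "2 * ln M * real n \<le> A * real n" using A1 by (simp add: mult_right_mono)
    then have "2 * (real n * ln M) \<le> A * real n" by (simp add: algebra_simps)
    then have r2: "sl_dist g h \<le> A * word_dist F g h + B"
      using u1 B0 unfolding sd wd by linarith
    show ?thesis using r1 r2 by blast
  qed
  have qi: "qi_embedded F" unfolding qi_embedded_def using A1(1) B0 key by blast
  show ?thesis using free qi by blast
qed

end
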